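(* Fix $\varepsilon\in(0,1/6)$ and $k=3$. Let $g:(0,\infty)\to(0,\infty)$ be any gradient function (any function of distance). There is no function $F:(0,\infty)^4\to\{1,2,3\}$ with the following property: for all $a,b>0$, the coloring of the rectangle $[0,a]\times[0,b]$ that assigns to the point $(x,y)$ the color $F\big(g(d_1),g(d_2),g(d_3),g(d_4)\big)$, where $d_1,\dots,d_4$ are the Euclidean distances from $(x,y)$ to the four corners $(0,0),(a,0),(0,b),(a,b)$, is an $\varepsilon$-approximate French flag. In other words, no algorithm in the concentration model with four point sources at the corners can produce an $\varepsilon$-approximate French flag for all flag dimensions.
   Context: Concentration model in 2D: four sources sit at the corners of the $a\times b$ flag (width $a$ along the $x$-axis, height $b$); each agent's only input is the measured concentration from each source, which is a function of its distance to that source; all agents run the same algorithm and have no other positional information (no coordinates, no knowledge of $a$ or $b$). A $k$-colored coloring of a flag of width $a$ is an $\varepsilon$-approximate flag if for every color $z\in\{1,\dots,k\}$ and every agent at $(x,y)$: (1) if $x\in[(\frac{z-1}{k}+\varepsilon)a,(\frac{z}{k}-\varepsilon)a]$ then the agent has color $z$; (2) if the agent has color $z$ then $x\in[(\frac{z-1}{k}-\varepsilon)a,(\frac{z}{k}+\varepsilon)a]$. For $k=3$ the colors are blue $=1$, white $=2$, red $=3$. *)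

theory Defs
  imports Complex_Main
begin

definition approx_flag ::
  "real \<Rightarrow> nat \<Rightarrow> real \<Rightarrow> (real \<times> real) set \<Rightarrow> (real \<Rightarrow> real \<Rightarrow> nat) \<Rightarrow> bool" where
  "approx_flag eps k a D col \<longleftrightarrow>
     (\<forall>z\<in>{1..k}. \<forall>(x, y)\<in>D.
        ((((real z - 1) / real k + eps) * a \<le> x \<and> x \<le> (real z / real k - eps) * a)
            \<longrightarrow> col x y = z) \<and>
        (col x y = z \<longrightarrow>
            (((real z - 1) / real k - eps) * a \<le> x \<and> x \<le> (real z / real k + eps) * a)))"

text \<open>Agents: all points of the rectangle [0,a] x [0,b] except the four corners
  (where some distance is 0 and the gradient function is undefined).\<close>
definition flag_points :: "real \<Rightarrow> real \<Rightarrow> (real \<times> real) set" where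
  "flag_points a b = {(x, y). 0 \<le> x \<and> x \<le> a \<and> 0 \<le> y \<and> y \<le> b \<and>
       (x, y) \<notin> {(0, 0), (a, 0), (0, b), (a, b)}}"

definition conc_coloring ::
  "(real \<Rightarrow> real \<Rightarrow> real \<Rightarrow> real \<Rightarrow> nat) \<Rightarrow> (real \<Rightarrow> real) \<Rightarrow> real \<Rightarrow> real \<Rightarrow> real \<Rightarrow> real \<Rightarrow> nat" where
  "conc_coloring F g a b x y =
     F (g (sqrt (x\<^sup>2 + y\<^sup>2))) (g (sqrt ((x - a)\<^sup>2 + y\<^sup>2)))
       (g (sqrt (x\<^sup>2 + (y - b)\<^sup>2))) (g (sqrt ((x - a)\<^sup>2 + (y - b)\<^sup>2)))"

end

theory Submission
  imports Defs
begin

theorem theorem2: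
  fixes eps :: real and g :: "real \<Rightarrow> real"
  assumes "0 < eps" and "eps < 1/6"
    and "\<forall>d>0. g d > 0"
  shows "\<not> (\<exists>F :: real \<Rightarrow> real \<Rightarrow> real \<Rightarrow> real \<Rightarrow> nat.
            (\<forall>u1 u2 u3 u4. u1 > 0 \<longrightarrow> u2 > 0 \<longrightarrow> u3 > 0 \<longrightarrow> u4 > 0 \<longrightarrow>
                F u1 u2 u3 u4 \<in> {1, 2, 3}) \<and>
            (\<forall>a b. a > 0 \<longrightarrow> b > 0 \<longrightarrow>
                approx_flag eps 3 a (flag_points a b) (conc_coloring F g a b)))"
proof
  assume "\<exists>F :: real \<Rightarrow> real \<Rightarrow> real \<Rightarrow> real \<Rightarrow> nat.
            (\<forall>u1 u2 u3 u4. u1 > 0 \<longrightarrow> u2 > 0 \<longrightarrow> u3 > 0 \<longrightarrow> u4 > 0 \<longrightarrow>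
                F u1 u2 u3 u4 \<in> {1, 2, 3}) \<and>
            (\<forall>a b. a > 0 \<longrightarrow> b > 0 \<longrightarrow>
                approx_flag eps 3 a (flag_points a b) (conc_coloring F g a b))"
  then obtain F where H: "\<And>a b. a > 0 \<Longrightarrow> b > 0 \<Longrightarrow>
                approx_flag eps 3 a (flag_points a b) (conc_coloring F g a b)" by blast
  define c where "c = 1/6 - eps"
  have c0: "0 < c" "c < 1/6" using assms c_def by auto
  define x' where "x' = 1/(2*c) - c/3"
  have inv: "1/(2*c) > 3" using c0 by (simp add: field_simps)
  have x'pos: "x' > 0" using inv c0 x'_def by auto
  have fp1: "(1/6, x') \<in> flag_points 1 (2*x')"
    unfolding flag_points_def using x'pos by auto
  have fp2: "(x', 1/6) \<in> flag_points (1/c) (1/3)"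
    unfolding flag_points_def using x'pos c0
    by (auto simp: x'_def field_simps)
  have A1: "approx_flag eps 3 1 (flag_points 1 (2*x')) (conc_coloring F g 1 (2*x'))"
    using H x'pos by auto
  have A2: "approx_flag eps 3 (1/c) (flag_points (1/c) (1/3)) (conc_coloring F g (1/c) (1/3))"
    using H c0 by auto
  have col1: "conc_coloring F g 1 (2*x') (1/6) x' = 1"
  proof -
    have "(((real 1 - 1) / real 3 + eps) * 1 \<le> 1/6 \<and> 1/6 \<le> (real 1 / real 3 - eps) * 1)
            \<longrightarrow> conc_coloring F g 1 (2*x') (1/6) x' = 1"
      using A1 fp1 unfolding approx_flag_def by fastforce
    moreover have "((real 1 - 1) / real 3 + eps) * 1 \<le> 1/6 \<and> (1/6::real) \<le> (real 1 / real 3 - eps) * 1"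
      using assms by auto
    ultimately show ?thesis by blast
  qed
  have eqd: "(1/6 - 1)^2 + x'^2 = (x' - 1/c)^2 + (1/6::real)^2"
    using c0 by (simp add: x'_def power2_eq_square field_simps)
  have eqd2: "(x' - 2*x')^2 = (1/6 - 1/3::real)^2 + (x'^2 - 1/36)"
    by (simp add: power2_eq_square field_simps)
  have same: "conc_coloring F g (1/c) (1/3) x' (1/6) = conc_coloring F g 1 (2*x') (1/6) x'"
    unfolding conc_coloring_def
  proof -
    have e1: "(x' - 2*x')^2 = x'^2" by (simp add: power2_eq_square)
    have e2: "(1/6 - 1/3::real)^2 = (1/6)^2" by (simp add: power2_eq_square)
    show "F (g (sqrt (x'\<^sup>2 + (1 / 6)\<^sup>2))) (g (sqrt ((x' - 1 / c)\<^sup>2 + (1 / 6)\<^sup>2)))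
     (g (sqrt (x'\<^sup>2 + (1 / 6 - 1 / 3)\<^sup>2))) (g (sqrt ((x' - 1 / c)\<^sup>2 + (1 / 6 - 1 / 3)\<^sup>2))) =
    F (g (sqrt ((1 / 6)\<^sup>2 + x'\<^sup>2))) (g (sqrt ((1 / 6 - 1)\<^sup>2 + x'\<^sup>2)))
     (g (sqrt ((1 / 6)\<^sup>2 + (x' - 2 * x')\<^sup>2))) (g (sqrt ((1 / 6 - 1)\<^sup>2 + (x' - 2 * x')\<^sup>2)))"
      using eqd e1 e2 by (simp add: add.commute)
  qed
  have col2: "conc_coloring F g (1/c) (1/3) x' (1/6) = 1" using same col1 by simp
  have "x' \<le> ((real 1) / real 3 + eps) * (1/c)"
  proof -
    have "conc_coloring F g (1/c) (1/3) x' (1/6) = 1 \<longrightarrow>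
      (((real 1 - 1) / real 3 - eps) * (1/c) \<le> x' \<and> x' \<le> (real 1 / real 3 + eps) * (1/c))"
      using A2 fp2 unfolding approx_flag_def by fastforce
    then show ?thesis using col2 by simp
  qed
  moreover have "((real 1) / real 3 + eps) * (1/c) = 1/(2*c) - 1"
    using c0 by (simp add: c_def field_simps)
  ultimately show False using x'_def c0 by auto
qed

end
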